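(* Let $(q_{i,j})_{i,j\in\mathbb Z^{\geq 0}}$ be the array defined greedily by $q_{i,j}=\operatorname{mex}(\{q_{i,k}+q_{l,j}-q_{l,k}\mid 0\leq l<i,\ 0\leq k<j\}\cap\mathbb Z^{\geq 0})$, so that $q_{0,j}=0$ and $q_{1,j}=j$. Put $q_j=q_{2,j}$, and for $j\in\mathbb Z^{\geq 0}$ let $S_j=\{q_{2,k}+q_{l,j}-q_{l,k}\mid 0\le l<2,\ 0\le k<j\}\cap\mathbb Z^{\ge 0}$ (so $q_j=\operatorname{mex}(S_j)$), $U_j=\{q_k\mid 0\leq k<j\}$ and $W_j=\{q_k+j-k\mid 0\leq k<j\}$. For $j\in\mathbb N$ let $n(j)=\max\{k\mid\{0,1,\dots,k\}\subseteq U_j\}$, write $U_j=\{0,1,\dots,n(j),z_{j,1},\dots,z_{j,j-n(j)-1}\}$ with $n(j)+2\le z_{j,1}<\dots<z_{j,j-n(j)-1}$, and let $m(j)=\lfloor\varphi j\rfloor-j+1$. Then for every $j\in\mathbb Z^{\geq 0}$: (i) if $j\geq1$, $W_j=\{m(j),m(j)+1,\dots,\lfloor\varphi j\rfloor\}$; (ii) if $j\geq1$, $z_{j,i}=b(k_j+i-1)$ for all $i\in\{1,\dots,j-n(j)-1\}$, where $k_j$ is the least natural number with $b(k_j)>n(j)$; (iii) if $j\geq1$ and $j\in T_1$, then $n(j)=m(j)-2$; (iv) if $j\geq1$ and $j\in T_2$, then $n(j)=m(j)-1$; (v) if $j\ge1$ and $j\in T_3$, then $n(j)=m(j)$; (vi)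 $S_j=\emptyset$ if $j=0$; $S_j=\{0,1,\dots,\lfloor\varphi j\rfloor\}$ if $j\in A$; $S_j=\{0,1,\dots,\lfloor\varphi j\rfloor\}\setminus\{\lfloor(\varphi-1)j\rfloor\}$ if $j\in B$; (vii) $q_j=0$ if $j=0$; $q_j=\lfloor\varphi j\rfloor+1$ if $j\in A$; $q_j=\lfloor(\varphi-1)j\rfloor$ if $j\in B$.
   Context: $\mathbb N=\{1,2,\dots\}$, $\mathbb Z^{\ge0}=\{0,1,2,\dots\}$, $\varphi=\frac{1+\sqrt5}{2}$, $a(n)=\lfloor n\varphi\rfloor$, $b(n)=\lfloor n\varphi^2\rfloor$, $A=\{a(n)\mid n\in\mathbb N\}$, $B=\{b(n)\mid n\in\mathbb N\}$. $T_1=\{b(n)\mid n\in\mathbb N\}$, $T_2=\{b(n)-1\mid n\in\mathbb N\}$, $T_3=\{2a(n)+n\mid n\in\mathbb N\}$. For $X\subseteq\mathbb Z^{\ge0}$, $\operatorname{mex}(X)=\min(\mathbb Z^{\ge0}\setminus X)$. *)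

theory Defs
  imports Complex_Main
begin

definition mex :: "int set \<Rightarrow> int" where
  "mex X = int (LEAST n::nat. int n \<notin> X)"

function qarr :: "nat \<Rightarrow> nat \<Rightarrow> int" where
  "qarr i j = mex ((\<lambda>(l,k). qarr i k + qarr l j - qarr l k) ` ({..<i} \<times> {..<j}) \<inter> {0..})"
  by auto
termination
  by (relation "measure (\<lambda>(i,j). i + j)") auto

definition phi :: real where "phi = (1 + sqrt 5) / 2"

definition a :: "nat \<Rightarrow> nat" where "a n = nat \<lfloor>real n * phi\<rfloor>"
definition b :: "nat \<Rightarrow> nat" where "b n = nat \<lfloor>real n * phi ^ 2\<rfloor>"

definition A :: "nat set" where "A = {a n | n. n \<ge> 1}"
definition B :: "nat set" where "B = {b n | n. n \<ge> 1}"
definition T1 :: "nat set" where "T1 = {b n | n. n \<ge> 1}"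
definition T2 :: "nat set" where "T2 = {b n - 1 | n. n \<ge> 1}"
definition T3 :: "nat set" where "T3 = {2 * a n + n | n. n \<ge> 1}"

definition qq :: "nat \<Rightarrow> int" where "qq j = qarr 2 j"

definition S :: "nat \<Rightarrow> int set" where
  "S j = {qarr 2 k + qarr l j - qarr l k | l k. l < 2 \<and> k < j} \<inter> {0..}"

definition U :: "nat \<Rightarrow> int set" where
  "U j = {qq k | k. k < j}"

definition W :: "nat \<Rightarrow> int set" where
  "W j = {qq k + int j - int k | k. k < j}"

definition nn :: "nat \<Rightarrow> int" where
  "nn j = Max {k::int. 0 \<le> k \<and> {0..k} \<subseteq> U j}"

definition zlist :: "nat \<Rightarrow> int list" where
  "zlist j = sorted_list_of_set (U j - {0..nn j})"

definition z :: "nat \<Rightarrow> nat \<Rightarrow> int" where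
  "z j i = zlist j ! (i - 1)"

definition m :: "nat \<Rightarrow> int" where
  "m j = int (a j) - int j + 1"

definition kk :: "nat \<Rightarrow> nat" where
  "kk j = (LEAST k. k \<ge> 1 \<and> int (b k) > nn j)"

end

theory Submission
  imports Defs "HOL-Computational_Algebra.Primes"
begin


lemma five_sq: "(d::nat)^2 = 5*k^2 \<Longrightarrow> k = 0"
proof (induction k arbitrary: d rule: less_induct)
  case (less k)
  show ?case
  proof (rule ccontr)
    assume k0: "k \<noteq> 0"
    have p5: "prime (5::nat)" by simp
    have "5 dvd d^2" using less.prems by simp
    then have "5 dvd d" using p5 prime_dvd_power by blast
    then obtain e where e: "d = 5*e" by blast
    have "k^2 = 5*e^2" using less.prems e by (simp add: power_mult_distrib)
    then have "5 dvd k^2" by simp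
    then have "5 dvd k" using p5 prime_dvd_power by blast
    then obtain f where f: "k = 5*f" by blast
    have "e^2 = 5*f^2" using \<open>k^2 = 5*e^2\<close> f by (simp add: power_mult_distrib)
    moreover have "f < k" using f k0 by simp
    ultimately have "f = 0" using less.IH by blast
    then show False using f k0 by simp
  qed
qed

lemma phi_sq: "phi^2 = phi + 1"
  unfolding phi_def by (simp add: power2_eq_square algebra_simps) 

lemma phi_bounds: "1.6 < phi" "phi < 1.7"
proof -
  have "2.2 < sqrt 5" by (rule real_less_rsqrt) (simp add: power2_eq_square)
  moreover have "sqrt 5 < 2.4" by (rule real_less_lsqrt) (auto simp: power2_eq_square)
  ultimately show "1.6 < phi" "phi < 1.7" unfolding phi_def by auto
qed

lemma phi_irr: assumes "k \<ge> 1" shows "real k * phi \<noteq> of_int c"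
proof
  assume h: "real k * phi = of_int c"
  have s: "sqrt 5 * real k = 2 * of_int c - real k" using h unfolding phi_def by (simp add: field_simps)
  have "(sqrt 5 * real k)^2 = 5 * (real k)^2" by (simp add: power_mult_distrib)
  then have "(2 * of_int c - real k)^2 = 5 * (real k)^2" using s by simp
  then have "real_of_int ((2*c - int k)^2) = real_of_int (5 * (int k)^2)" by simp
  then have "(2*c - int k)^2 = 5 * (int k)^2" by linarith
  then have "int ((nat \<bar>2*c - int k\<bar>)^2) = int (5*k^2)" by simp
  then have "(nat \<bar>2*c - int k\<bar>)^2 = 5*k^2" by linarith
  then have "k = 0" by (rule five_sq)
  then show False using assms by simp
qed



lemma nat_floor_eqI: "real c \<le> x \<Longrightarrow> x < real c + 1 \<Longrightarrow> nat \<lfloor>x\<rfloor> = c"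
  by (metis floor_eq2 nat_int of_int_of_nat_eq)

lemma a_le: "real (a n) \<le> real n * phi" and a_lt: "real n * phi < real (a n) + 1"
proof -
  have p: "0 \<le> real n * phi" using phi_bounds by simp
  have "real (a n) = of_int \<lfloor>real n * phi\<rfloor>" unfolding a_def using p by simp
  then show "real (a n) \<le> real n * phi" "real n * phi < real (a n) + 1" by linarith+
qed

lemma a_lt_strict: assumes "n \<ge> 1" shows "real (a n) < real n * phi"
  using a_le[of n] phi_irr[OF assms, of "int (a n)"] by force

lemma b_eq: "b n = a n + n"
proof -
  have "b n = nat \<lfloor>real n * phi + real n\<rfloor>" unfolding b_def using phi_sq by (simp add: algebra_simps)
  also have "\<dots> = a n + n" by (rule nat_floor_eqI) (use a_le[of n] a_lt[of n] in auto)
  finally show ?thesis .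
qed

lemma prod01: "0 < (x::real) \<Longrightarrow> x < 1 \<Longrightarrow> 0 < y \<Longrightarrow> y < 1 \<Longrightarrow> 0 < x*y \<and> x*y < 1"
  by (metis mult_pos_pos mult_strict_mono mult_1 zero_less_one order_less_imp_le)



lemma a_ge: "n \<le> a n"
proof -
  have "real n * 1 \<le> real n * phi" using phi_bounds by (intro mult_left_mono) auto
  then have "real n < real (a n) + 1" using a_lt[of n] by linarith
  then show ?thesis by linarith
qed

lemma cphi: "real (a n) * phi = real (a n) + real n - (real n * phi - real (a n)) * (phi - 1)"
proof -
  have "real n * (phi * phi) = real n * (phi + 1)" using phi_sq by (simp add: power2_eq_square)
  then show ?thesis by (simp add: algebra_simps)
qed

lemma f_bounds: assumes "n \<ge> 1" shows "0 < real n * phi - real (a n)" "real n * phi - real (a n) < 1"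
  using a_lt_strict[OF assms] a_lt[of n] by auto

lemma a_a: assumes "n \<ge> 1" shows "a (a n) = a n + n - 1"
proof -
  define f where "f = real n * phi - real (a n)"
  have f: "0 < f" "f < 1" using f_bounds[OF assms] unfolding f_def by auto
  have p: "0 < f * (phi - 1)" "f * (phi - 1) < 1" using prod01[OF f, of "phi - 1"] phi_bounds by auto
  have e: "real (a n) * phi = real (a n) + real n - f * (phi - 1)" using cphi unfolding f_def .
  have "a (a n) = nat \<lfloor>real (a n) * phi\<rfloor>" by (simp add: a_def)
  also have "\<dots> = a n + n - 1"
    by (rule nat_floor_eqI) (use e p assms in auto)
  finally show ?thesis .
qed

lemma a_b: assumes "n \<ge> 1" shows "a (b n) = 2 * a n + n"
proof -
  define f where "f = real n * phi - real (a n)"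
  have f: "0 < f" "f < 1" using f_bounds[OF assms] unfolding f_def by auto
  have p: "0 < f * (2 - phi)" "f * (2 - phi) < 1" using prod01[OF f, of "2 - phi"] phi_bounds by auto
  have e: "real (b n) * phi = real (2 * a n + n) + f * (2 - phi)"
    using cphi[of n] unfolding f_def b_eq by (simp add: algebra_simps)
  have "a (b n) = nat \<lfloor>real (b n) * phi\<rfloor>" by (simp add: a_def)
  also have "\<dots> = 2 * a n + n"
    by (rule nat_floor_eqI) (use e p in auto)
  finally show ?thesis .
qed

lemma a_b1: assumes "n \<ge> 1" shows "a (b n - 1) = 2 * a n + n - 2"
proof -
  define f where "f = real n * phi - real (a n)"
  have f: "0 < f" "f < 1" using f_bounds[OF assms] unfolding f_def by auto
  have p: "0 < f * (2 - phi)" "f * (2 - phi) < 2 - phi" proof -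
    show "0 < f * (2 - phi)" using f phi_bounds by simp
    show "f * (2 - phi) < 2 - phi" using f phi_bounds mult_strict_right_mono[of f 1 "2 - phi"] by simp
  qed
  have an: "a n \<ge> 1" using a_ge[of n] assms by simp
  have bn: "b n \<ge> 1" using b_eq assms by simp
  have r1: "real (b n - 1) = real (a n) + real n - 1" using bn b_eq by (simp add: of_nat_diff)
  have r2: "real (2 * a n + n - 2) = 2 * real (a n) + real n - 2" using an by (simp add: of_nat_diff)
  have e: "real (b n - 1) * phi = 2 * real (a n) + real n + f * (2 - phi) - phi"
    using cphi[of n] unfolding f_def r1 by (simp add: algebra_simps)
  have "a (b n - 1) = nat \<lfloor>real (b n - 1) * phi\<rfloor>" by (simp add: a_def)
  also have "\<dots> = 2 * a n + n - 2"
    by (rule nat_floor_eqI) (use e p phi_bounds r2 in linarith)+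
  finally show ?thesis .
qed

lemma a_2an: assumes "n \<ge> 1" shows "a (2 * a n + n) = 3 * a n + 2 * n - 1"
proof -
  define f where "f = real n * phi - real (a n)"
  have f: "0 < f" "f < 1" using f_bounds[OF assms] unfolding f_def by auto
  have p: "0 < f * (2 * phi - 3)" "f * (2 * phi - 3) < 1" using prod01[OF f, of "2 * phi - 3"] phi_bounds by auto
  have e: "real (2 * a n + n) * phi = real (3 * a n + 2 * n) - f * (2 * phi - 3)"
    using cphi[of n] unfolding f_def by (simp add: algebra_simps)
  have "a (2 * a n + n) = nat \<lfloor>real (2 * a n + n) * phi\<rfloor>" by (simp add: a_def)
  also have "\<dots> = 3 * a n + 2 * n - 1"
    by (rule nat_floor_eqI) (use e p assms in auto)
  finally show ?thesis .
qed

lemma a_an1: assumes "n \<ge> 1" shows "a (a n + 1) = a n + n + 1"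
proof -
  define f where "f = real n * phi - real (a n)"
  have f: "0 < f" "f < 1" using f_bounds[OF assms] unfolding f_def by auto
  have p: "0 < (1 - f) * (phi - 1)" "(1 - f) * (phi - 1) < 1" using prod01[of "1 - f" "phi - 1"] f phi_bounds by auto
  have e: "real (a n + 1) * phi = real (a n + n + 1) + (1 - f) * (phi - 1)"
    using cphi[of n] unfolding f_def by (simp add: algebra_simps)
  have "a (a n + 1) = nat \<lfloor>real (a n + 1) * phi\<rfloor>" by (simp add: a_def)
  also have "\<dots> = a n + n + 1"
    by (rule nat_floor_eqI) (use e p in auto)
  finally show ?thesis .
qed



lemma phi_mul: "(x::real) * phi * phi = x * phi + x"
proof -
  have "x * (phi * phi) = x * (phi + 1)" using phi_sq by (simp add: power2_eq_square)
  then show ?thesis by (simp add: algebra_simps)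
qed

lemma a_Suc: "a k + 1 \<le> a (Suc k)" "a (Suc k) \<le> a k + 2"
proof -
  have e: "real (Suc k) * phi = real k * phi + phi" by (simp add: algebra_simps)
  have "real (a k) + 1 < real (a (Suc k)) + 1" using a_le[of k] a_lt[of "Suc k"] e phi_bounds by linarith
  then show "a k + 1 \<le> a (Suc k)" by linarith
  have "real (a (Suc k)) < real (a k) + 3" using a_lt[of k] a_le[of "Suc k"] e phi_bounds by linarith
  then show "a (Suc k) \<le> a k + 2" by linarith
qed

lemma a_mono: "strict_mono a"
proof (rule strict_mono_Suc_iff[THEN iffD2], intro allI)
  fix n show "a n < a (Suc n)" using a_Suc(1)[of n] by linarith
qed

lemma b_mono: "strict_mono b"
  using a_mono unfolding strict_mono_def b_eq by (simp add: add_less_mono)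

lemma a_less_iff: "a x < a y \<longleftrightarrow> x < y"
  using a_mono by (simp add: strict_mono_less)
lemma b_less_iff: "b x < b y \<longleftrightarrow> x < y"
  using b_mono by (simp add: strict_mono_less)
lemma a_inj: "a x = a y \<longleftrightarrow> x = y"
  using a_mono strict_mono_eq by blast
lemma b_inj: "b x = b y \<longleftrightarrow> x = y"
  using b_mono strict_mono_eq by blast
lemma a_le_iff: "a x \<le> a y \<longleftrightarrow> x \<le> y"
  using a_mono by (simp add: strict_mono_less_eq)
lemma b_le_iff: "b x \<le> b y \<longleftrightarrow> x \<le> y"
  using b_mono by (simp add: strict_mono_less_eq)

lemma a_lt2: assumes "k \<ge> 1" shows "a k < 2 * k"
proof -
  have "real k * phi < 2 * real k" using phi_bounds assms by simp
  then show ?thesis using a_le[of k] by linarith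
qed

lemma a0: "a 0 = 0" by (simp add: a_def)

lemma charA: assumes k: "k \<ge> 1" and n: "n \<ge> 1" shows "a n < k \<longleftrightarrow> n \<le> a k - k"
proof -
  have id: "real k * phi - real n - real k = (real k - real n * phi) * (phi - 1)"
    using phi_mul[of "real n"] by (simp add: algebra_simps)
  have "a n < k \<longleftrightarrow> real n * phi < real k"
  proof
    assume "a n < k" then have "real (a n) + 1 \<le> real k" by linarith
    then show "real n * phi < real k" using a_lt[of n] by linarith
  next
    assume "real n * phi < real k" then have "real (a n) < real k" using a_le[of n] by linarith
    then show "a n < k" by linarith
  qed
  also have "\<dots> \<longleftrightarrow> real n + real k < real k * phi"
  proof -
    have "0 < phi - 1" using phi_bounds by simp
    then have "0 < real k - real n * phi \<longleftrightarrow> 0 < real k * phi - real n - real k"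
      unfolding id by (simp add: zero_less_mult_iff)
    then show ?thesis by linarith
  qed
  also have "\<dots> \<longleftrightarrow> n + k \<le> a k"
  proof
    assume "real n + real k < real k * phi" then have "real n + real k < real (a k) + 1" using a_lt[of k] by linarith
    then show "n + k \<le> a k" by linarith
  next
    assume "n + k \<le> a k" then have "real n + real k \<le> real (a k)" by linarith
    then show "real n + real k < real k * phi" using a_lt_strict[OF k] by linarith
  qed
  also have "\<dots> \<longleftrightarrow> n \<le> a k - k" using a_ge[of k] by linarith
  finally show ?thesis .
qed



lemma charB: assumes k: "k \<ge> 1" shows "b n < k \<longleftrightarrow> n \<le> 2 * k - a k - 1"
proof -
  have id: "2 * real k - real k * phi - real n = (real k - real n * phi - real n) * (2 - phi)"
    using phi_mul[of "real n"] by (simp add: algebra_simps)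
  have "b n < k \<longleftrightarrow> real n * phi + real n < real k"
  proof
    assume "b n < k" then have "real (a n) + 1 + real n \<le> real k" unfolding b_eq by linarith
    then show "real n * phi + real n < real k" using a_lt[of n] by linarith
  next
    assume "real n * phi + real n < real k" then have "real (a n) + real n < real k" using a_le[of n] by linarith
    then show "b n < k" unfolding b_eq by linarith
  qed
  also have "\<dots> \<longleftrightarrow> real k * phi < 2 * real k - real n"
  proof -
    have "0 < 2 - phi" using phi_bounds by simp
    then have "0 < real k - real n * phi - real n \<longleftrightarrow> 0 < 2 * real k - real k * phi - real n"
      unfolding id by (simp add: zero_less_mult_iff)
    then show ?thesis by linarith
  qed
  also have "\<dots> \<longleftrightarrow> a k + n + 1 \<le> 2 * k"
  proof
    assume "real k * phi < 2 * real k - real n" then have "real (a k) < 2 * real k - real n" using a_le[of k] by linarith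
    then show "a k + n + 1 \<le> 2 * k" by linarith
  next
    assume "a k + n + 1 \<le> 2 * k" then have "real (a k) + real n + 1 \<le> 2 * real k" by linarith
    then show "real k * phi < 2 * real k - real n" using a_lt[of k] by linarith
  qed
  also have "\<dots> \<longleftrightarrow> n \<le> 2 * k - a k - 1" using a_lt2[OF k] by linarith
  finally show ?thesis .
qed

lemma inA_iff: assumes k: "k \<ge> 1" shows "k \<in> A \<longleftrightarrow> a k - k < a (k+1) - (k+1)"
proof
  assume "k \<in> A" then obtain n where n: "n \<ge> 1" "k = a n" unfolding A_def by auto
  have "n \<le> a (k+1) - (k+1)" using charA[of "k+1" n] n by simp
  moreover have "\<not> n \<le> a k - k" using charA[OF k n(1)] n by simp
  ultimately show "a k - k < a (k+1) - (k+1)" by simp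
next
  assume h: "a k - k < a (k+1) - (k+1)"
  define n where "n = a k - k + 1"
  have n1: "n \<ge> 1" unfolding n_def by simp
  have "a n < k + 1" using charA[of "k+1" n] n1 h unfolding n_def by simp
  moreover have "\<not> a n < k" using charA[OF k n1] unfolding n_def by simp
  ultimately have "k = a n" by simp
  then show "k \<in> A" unfolding A_def using n1 by auto
qed

lemma inB_iff: assumes k: "k \<ge> 1" shows "k \<in> B \<longleftrightarrow> 2 * k - a k - 1 < 2 * (k+1) - a (k+1) - 1"
proof
  assume "k \<in> B" then obtain n where n: "n \<ge> 1" "k = b n" unfolding B_def by auto
  have "n \<le> 2 * (k+1) - a (k+1) - 1" using charB[of "k+1" n] n by simp
  moreover have "\<not> n \<le> 2 * k - a k - 1" using charB[OF k, of n] n by simp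
  ultimately show "2 * k - a k - 1 < 2 * (k+1) - a (k+1) - 1" by simp
next
  assume h: "2 * k - a k - 1 < 2 * (k+1) - a (k+1) - 1"
  define n where "n = 2 * k - a k - 1 + 1"
  have n1: "n \<ge> 1" unfolding n_def by simp
  have "b n < k + 1" using charB[of "k+1" n] n1 h unfolding n_def by simp
  moreover have "\<not> b n < k" using charB[OF k, of n] unfolding n_def by simp
  ultimately have "k = b n" by simp
  then show "k \<in> B" unfolding B_def using n1 by auto
qed

lemma AB: assumes k: "k \<ge> 1" shows "k \<in> A \<longleftrightarrow> k \<notin> B"
  using inA_iff[OF k] inB_iff[OF k] a_Suc[of k] a_ge[of k] a_lt2[OF k] by auto

lemma notA0: "0 \<notin> A"
proof
  assume "0 \<in> A" then obtain n where "n \<ge> 1" "a n = 0" unfolding A_def by auto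
  then show False using a_ge[of n] by simp
qed
lemma notB0: "0 \<notin> B"
  unfolding B_def using b_eq by auto

lemma aA: "n \<ge> 1 \<Longrightarrow> a n \<in> A" unfolding A_def by auto
lemma bB: "n \<ge> 1 \<Longrightarrow> b n \<in> B" unfolding B_def by auto



definition w :: "nat \<Rightarrow> nat" where
  "w k = (if k = 0 then 0 else if k \<in> A then a k + 1 else a k - k)"

lemma w0: "w 0 = 0" by (simp add: w_def)

lemma w_a: assumes "n \<ge> 1" shows "w (a n) = b n"
proof -
  have "a n \<ge> 1" using a_ge[of n] assms by simp
  then show ?thesis using aA[OF assms] a_a[OF assms] assms unfolding w_def b_eq by simp
qed

lemma w_b: assumes "n \<ge> 1" shows "w (b n) = a n"
proof -
  have bn: "b n \<ge> 1" using assms b_eq by simp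
  then have "b n \<notin> A" using AB[OF bn] bB[OF assms] by simp
  then show ?thesis using bn a_b[OF assms] unfolding w_def b_eq by simp
qed

lemma AorB: assumes "k \<ge> 1" shows "(\<exists>n\<ge>1. k = a n) \<or> (\<exists>n\<ge>1. k = b n)"
  using AB[OF assms] unfolding A_def B_def by blast

lemma w_w: "w (w k) = k"
proof (cases "k = 0")
  case True then show ?thesis by (simp add: w0)
next
  case False
  then have "k \<ge> 1" by simp
  then consider (A) n where "n \<ge> 1" "k = a n" | (B) n where "n \<ge> 1" "k = b n" using AorB by blast
  then show ?thesis
  proof cases
    case A then show ?thesis using w_a w_b by simp
  next
    case B then show ?thesis using w_a w_b by simp
  qed
qed

lemma w_inj: "inj w"
proof (rule injI)
  fix x y assume "w x = w y" then have "w (w x) = w (w y)" by simp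
  then show "x = y" by (simp add: w_w)
qed


declare qarr.simps[simp del]
lemma mex_eqI: assumes "0 \<le> x" "x \<notin> X" "\<And>y. 0 \<le> y \<Longrightarrow> y < x \<Longrightarrow> y \<in> X" shows "mex X = x"
proof -
  obtain t where t: "x = int t" using assms(1) nonneg_int_cases by blast
  have "(LEAST n::nat. int n \<notin> X) = t"
  proof (rule Least_equality)
    show "int t \<notin> X" using assms t by simp
    fix y :: nat assume "int y \<notin> X" then show "t \<le> y" using assms(3)[of "int y"] t by force
  qed
  then show ?thesis unfolding mex_def t by simp
qed

lemma mex_nonneg: "0 \<le> mex X" by (simp add: mex_def)

lemma q0: "qarr 0 j = 0"
  by (subst qarr.simps) (rule mex_eqI, auto)


lemma q1: "qarr (Suc 0) j = int j"
proof (induction j rule: less_induct)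
  case (less j)
  have "(\<lambda>(l, k). qarr 1 k + qarr l j - qarr l k) ` ({..<1} \<times> {..<j}) \<inter> {0..} = {0..<int j}"
  proof (rule set_eqI, rule iffI)
    fix x assume "x \<in> (\<lambda>(l, k). qarr 1 k + qarr l j - qarr l k) ` ({..<1} \<times> {..<j}) \<inter> {0..}"
    then show "x \<in> {0..<int j}" using less.IH by (auto simp: q0)
  next
    fix x assume x: "x \<in> {0..<int j}"
    then have mem: "((0::nat), nat x) \<in> {..<(1::nat)} \<times> {..<j}" by auto
    moreover have eq: "x = (\<lambda>(l, k). qarr 1 k + qarr l j - qarr l k) (0, nat x)" proof -
      have "nat x < j" using x by auto
      then have "qarr 1 (nat x) = x" using less.IH[of "nat x"] x by simp
      then show ?thesis by (simp add: q0)
    qed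
    ultimately show "x \<in> (\<lambda>(l, k). qarr 1 k + qarr l j - qarr l k) ` ({..<1} \<times> {..<j}) \<inter> {0..}"
      using rev_image_eqI[OF mem, of x "\<lambda>(l, k). qarr 1 k + qarr l j - qarr l k", OF eq] x by auto
  qed
  then show ?case by (subst qarr.simps) (rule mex_eqI, auto)
qed

lemma qq_nonneg: "0 \<le> qq j" unfolding qq_def by (subst qarr.simps) (rule mex_nonneg)

lemma qq_S: "qq j = mex (S j)"
proof -
  have "(\<lambda>(l, k). qarr 2 k + qarr l j - qarr l k) ` ({..<2} \<times> {..<j}) = {qarr 2 k + qarr l j - qarr l k | l k. l < 2 \<and> k < j}"
    by force
  then show ?thesis unfolding qq_def S_def by (subst qarr.simps) simp
qed

lemma S_UW: "S j = U j \<union> W j"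
proof -
  have l2: "\<And>l::nat. l < 2 \<longleftrightarrow> l = 0 \<or> l = 1" by auto
  have "{qarr 2 k + qarr l j - qarr l k | l k. l < 2 \<and> k < j} = U j \<union> W j"
  proof (rule set_eqI, rule iffI)
    fix x assume "x \<in> {qarr 2 k + qarr l j - qarr l k | l k. l < 2 \<and> k < j}"
    then obtain l k where "l < 2" "k < j" "x = qarr 2 k + qarr l j - qarr l k" by blast
    then show "x \<in> U j \<union> W j" unfolding U_def W_def qq_def l2 by (auto simp: q0 q1)
  next
    fix x assume "x \<in> U j \<union> W j"
    then consider k where "k < j" "x = qq k" | k where "k < j" "x = qq k + int j - int k" unfolding U_def W_def by blast
    then show "x \<in> {qarr 2 k + qarr l j - qarr l k | l k. l < 2 \<and> k < j}"
    proof cases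
      case 1 then have "x = qarr 2 k + qarr 0 j - qarr 0 k \<and> (0::nat) < 2 \<and> k < j" by (simp add: q0 qq_def)
      then show ?thesis by blast
    next
      case 2 then have "x = qarr 2 k + qarr 1 j - qarr 1 k \<and> (1::nat) < 2 \<and> k < j" by (simp add: q1 qq_def)
      then show ?thesis by blast
    qed
  qed
  moreover have "U j \<union> W j \<subseteq> {0..}"
  proof
    fix x assume "x \<in> U j \<union> W j"
    then consider k where "k < j" "x = qq k" | k where "k < j" "x = qq k + int j - int k" unfolding U_def W_def by blast
    then show "x \<in> {0..}"
    proof cases
      case 1 then show ?thesis using qq_nonneg[of k] by simp
    next
      case 2 then show ?thesis using qq_nonneg[of k] by simp
    qed
  qed
  ultimately show ?thesis unfolding S_def by blast
qed



lemma Ua_char: assumes j: "j \<ge> 1"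
  shows "x \<in> w ` {..<j} \<longleftrightarrow> x = 0 \<or> (\<exists>n. 1 \<le> n \<and> n \<le> a j - j \<and> x = b n) \<or> (\<exists>n. 1 \<le> n \<and> n \<le> 2 * j - a j - 1 \<and> x = a n)"
proof
  assume "x \<in> w ` {..<j}"
  then obtain k where k: "k < j" "x = w k" by auto
  show "x = 0 \<or> (\<exists>n. 1 \<le> n \<and> n \<le> a j - j \<and> x = b n) \<or> (\<exists>n. 1 \<le> n \<and> n \<le> 2 * j - a j - 1 \<and> x = a n)"
  proof (cases "k = 0")
    case True then show ?thesis using k by (simp add: w0)
  next
    case False
    then consider (A) n where "n \<ge> 1" "k = a n" | (B) n where "n \<ge> 1" "k = b n" using AorB[of k] by auto
    then show ?thesis
    proof cases
      case A
      then have "n \<le> a j - j" using charA[OF j A(1)] k by simp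
      then show ?thesis using A k w_a by auto
    next
      case B
      then have "n \<le> 2 * j - a j - 1" using charB[OF j, of n] k by simp
      then show ?thesis using B k w_b by auto
    qed
  qed
next
  assume "x = 0 \<or> (\<exists>n. 1 \<le> n \<and> n \<le> a j - j \<and> x = b n) \<or> (\<exists>n. 1 \<le> n \<and> n \<le> 2 * j - a j - 1 \<and> x = a n)"
  then consider "x = 0" | n where "1 \<le> n" "n \<le> a j - j" "x = b n" | n where "1 \<le> n" "n \<le> 2 * j - a j - 1" "x = a n" by blast
  then show "x \<in> w ` {..<j}"
  proof cases
    case 1 then show ?thesis using j w0 by force
  next
    case (2 n)
    then have "a n < j" using charA[OF j 2(1)] by simp
    then show ?thesis using 2 w_a[OF 2(1)] by force
  next
    case (3 n)
    then have "b n < j" using charB[OF j, of n] by simp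
    then show ?thesis using 3 w_b[OF 3(1)] by force
  qed
qed

lemma Wa_char: assumes j: "j \<ge> 1"
  shows "(\<lambda>k. int (w k) + int j - int k) ` {..<j} = {int (a j) - int j + 1 .. int (a j)}"
proof (rule set_eqI, rule iffI)
  have b1: "a j \<ge> j" "a j < 2 * j" using a_ge a_lt2[OF j] by auto
  fix v assume "v \<in> (\<lambda>k. int (w k) + int j - int k) ` {..<j}"
  then obtain k where k: "k < j" "v = int (w k) + int j - int k" by auto
  show "v \<in> {int (a j) - int j + 1 .. int (a j)}"
  proof (cases "k = 0")
    case True then show ?thesis using k b1 by (simp add: w0)
  next
    case False
    then consider (A) n where "n \<ge> 1" "k = a n" | (B) n where "n \<ge> 1" "k = b n" using AorB[of k] by auto
    then show ?thesis
    proof cases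
      case A
      then have "n \<le> a j - j" using charA[OF j A(1)] k by simp
      then show ?thesis using A k w_a b1 b_eq by auto
    next
      case B
      then have "n \<le> 2 * j - a j - 1" using charB[OF j, of n] k by simp
      then show ?thesis using B k w_b b1 b_eq by auto
    qed
  qed
next
  have b1: "a j \<ge> j" "a j < 2 * j" using a_ge a_lt2[OF j] by auto
  fix v assume v: "v \<in> {int (a j) - int j + 1 .. int (a j)}"
  consider "v = int j" | "v > int j" | "v < int j" by linarith
  then show "v \<in> (\<lambda>k. int (w k) + int j - int k) ` {..<j}"
  proof cases
    case 1
    have "v = int (w 0) + int j - int 0" using 1 by (simp add: w0)
    moreover have "(0::nat) \<in> {..<j}" using j by simp
    ultimately show ?thesis by (rule rev_image_eqI[rotated])
  next
    case 2
    define n where "n = nat (v - int j)"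
    have n: "1 \<le> n" "n \<le> a j - j" using 2 v b1 unfolding n_def by auto
    then have "a n < j" using charA[OF j n(1)] by simp
    moreover have "v = int (w (a n)) + int j - int (a n)" using w_a[OF n(1)] b_eq 2 unfolding n_def by simp
    ultimately show ?thesis by force
  next
    case 3
    define n where "n = nat (int j - v)"
    have n: "1 \<le> n" "n \<le> 2 * j - a j - 1" using 3 v b1 unfolding n_def by auto
    then have "b n < j" using charB[OF j, of n] by simp
    moreover have "v = int (w (b n)) + int j - int (b n)" using w_b[OF n(1)] b_eq 3 unfolding n_def by simp
    ultimately show ?thesis by force
  qed
qed



lemma ab_ne: "n \<ge> 1 \<Longrightarrow> n' \<ge> 1 \<Longrightarrow> a n \<noteq> b n'"
  using AB aA bB a_ge by (metis le_trans)

lemma a_pos: "n \<ge> 1 \<Longrightarrow> a n \<ge> 1" using a_ge[of n] by simp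

lemma UA: assumes t: "t \<ge> 1" and j: "j = a t"
  shows "x \<in> w ` {..<j} \<Longrightarrow> x \<le> a j" and "1 \<le> x \<Longrightarrow> x \<le> a j - j \<Longrightarrow> x \<in> w ` {..<j}"
proof -
  have j1: "j \<ge> 1" using j a_pos[OF t] by simp
  have aj: "a j = a t + t - 1" using a_a[OF t] j by simp
  have F: "a j - j = t - 1" using aj j t by simp
  have G: "2 * j - a j - 1 = a t - t" using aj j t a_ge[of t] by simp
  show "x \<le> a j" if "x \<in> w ` {..<j}"
  proof -
    from that consider "x = 0" | n where "1 \<le> n" "n \<le> t - 1" "x = b n" | n where "1 \<le> n" "n \<le> a t - t" "x = a n"
      unfolding Ua_char[OF j1] F G by blast
    then show ?thesis
    proof cases
      case 1 then show ?thesis by simp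
    next
      case (2 n) then have "b n < b t" using b_less_iff t by simp
      then show ?thesis using 2 aj b_eq t by simp
    next
      case (3 n) then have "n \<le> j" using j a_ge[of t] by simp
      then show ?thesis using 3 a_le_iff by simp
    qed
  qed
  show "x \<in> w ` {..<j}" if x: "1 \<le> x" "x \<le> a j - j"
  proof -
    consider n where "1 \<le> n" "x = a n" | n where "1 \<le> n" "x = b n" using AorB[OF x(1)] by blast
    then show ?thesis
    proof cases
      case (1 n) then have "a n < t" using x F t by linarith
      then have "n \<le> a t - t" using charA[OF t 1(1)] by simp
      then show ?thesis unfolding Ua_char[OF j1] G using 1 by blast
    next
      case (2 n) then have "n \<le> t - 1" using x F b_eq by simp
      then show ?thesis unfolding Ua_char[OF j1] F using 2 by blast
    qed
  qed
qed

lemma UB: assumes t: "t \<ge> 1" and j: "j = b t"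
  shows "x \<in> w ` {..<j} \<Longrightarrow> x \<le> a j \<and> x \<noteq> a t" and "x < a t \<Longrightarrow> x \<in> w ` {..<j}"
    and "a j - j = a t"
proof -
  have j1: "j \<ge> 1" using j b_eq t by simp
  have aj: "a j = 2 * a t + t" using a_b[OF t] j by simp
  show F: "a j - j = a t" using aj j b_eq by simp
  have G: "2 * j - a j - 1 = t - 1" using aj j t b_eq by simp
  show "x \<le> a j \<and> x \<noteq> a t" if "x \<in> w ` {..<j}"
  proof -
    from that consider "x = 0" | n where "1 \<le> n" "n \<le> a t" "x = b n" | n where "1 \<le> n" "n \<le> t - 1" "x = a n"
      unfolding Ua_char[OF j1] F G by blast
    then show ?thesis
    proof cases
      case 1 then show ?thesis using a_pos[OF t] by simp
    next
      case (2 n) then have "b n \<le> b (a t)" using b_le_iff by simp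
      then show ?thesis using 2 aj b_eq a_a[OF t] ab_ne[OF t 2(1)] by simp
    next
      case (3 n) then have "n \<le> j" "n \<noteq> t" using j b_eq by auto
      then show ?thesis using 3 a_le_iff a_inj by simp
    qed
  qed
  show "x \<in> w ` {..<j}" if x: "x < a t"
  proof (cases "x = 0")
    case True then show ?thesis unfolding Ua_char[OF j1] by simp
  next
    case False
    then consider n where "1 \<le> n" "x = a n" | n where "1 \<le> n" "x = b n" using AorB[of x] by auto
    then show ?thesis
    proof cases
      case (1 n) then have "n \<le> t - 1" using x a_less_iff by simp
      then show ?thesis unfolding Ua_char[OF j1] G using 1 by blast
    next
      case (2 n) then have "n \<le> a t" using x b_eq by simp
      then show ?thesis unfolding Ua_char[OF j1] F using 2 by blast
    qed
  qed
qed



lemma UW_eq: assumes j: "j \<ge> 1" and IH: "\<And>k. k < j \<Longrightarrow> qq k = int (w k)"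
  shows "U j = int ` w ` {..<j}" "W j = {int (a j) - int j + 1 .. int (a j)}"
proof -
  show "U j = int ` w ` {..<j}"
  proof (rule set_eqI, rule iffI)
    fix x assume "x \<in> U j" then obtain k where "k < j" "x = qq k" unfolding U_def by blast
    then show "x \<in> int ` w ` {..<j}" using IH by auto
  next
    fix x assume "x \<in> int ` w ` {..<j}" then obtain k where "k < j" "x = int (w k)" by blast
    then have "x = qq k \<and> k < j" using IH by simp
    then show "x \<in> U j" unfolding U_def by blast
  qed
  have "W j = (\<lambda>k. int (w k) + int j - int k) ` {..<j}"
  proof (rule set_eqI, rule iffI)
    fix x assume "x \<in> W j" then obtain k where "k < j" "x = qq k + int j - int k" unfolding W_def by blast
    then show "x \<in> (\<lambda>k. int (w k) + int j - int k) ` {..<j}" using IH by auto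
  next
    fix x assume "x \<in> (\<lambda>k. int (w k) + int j - int k) ` {..<j}" then obtain k where "k < j" "x = int (w k) + int j - int k" by blast
    then have "x = qq k + int j - int k \<and> k < j" using IH by simp
    then show "x \<in> W j" unfolding W_def by blast
  qed
  then show "W j = {int (a j) - int j + 1 .. int (a j)}" using Wa_char[OF j] by simp
qed

lemma SA: assumes t: "t \<ge> 1" and j: "j = a t" and IH: "\<And>k. k < j \<Longrightarrow> qq k = int (w k)"
  shows "S j = {0..int (a j)}"
proof -
  have j1: "j \<ge> 1" using j a_pos[OF t] by simp
  note UW = UW_eq[OF j1 IH]
  have aj: "a j \<ge> j" using a_ge by simp
  show ?thesis unfolding S_UW
  proof (rule set_eqI, rule iffI)
    fix y assume "y \<in> U j \<union> W j"
    then have "y \<in> int ` w ` {..<j} \<union> {int (a j) - int j + 1 .. int (a j)}" using UW by simp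
    then consider "y \<in> int ` w ` {..<j}" | "y \<in> {int (a j) - int j + 1 .. int (a j)}" by blast
    then show "y \<in> {0..int (a j)}"
    proof cases
      case 1 then obtain x where "x \<in> w ` {..<j}" "y = int x" by blast
      then show ?thesis using UA(1)[OF t j, of x] by simp
    next
      case 2 then show ?thesis using aj by simp
    qed
  next
    fix y assume y: "y \<in> {0..int (a j)}"
    have y0: "0 \<le> y" using y by simp
    consider "y = 0" | "1 \<le> y \<and> y \<le> int (a j) - int j" | "y \<ge> int (a j) - int j + 1" using y0 by linarith
    then show "y \<in> U j \<union> W j"
    proof cases
      case 1
      have "0 \<in> w ` {..<j}" using j1 w0 by force
      then have "int 0 \<in> int ` w ` {..<j}" by blast
      then show ?thesis using 1 UW by simp
    next
      case 2
      then have "nat y \<in> w ` {..<j}" using UA(2)[OF t j, of "nat y"] aj by auto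
      then have "int (nat y) \<in> int ` w ` {..<j}" by blast
      then show ?thesis using 2 UW by simp
    next
      case 3 then show ?thesis using y UW by auto
    qed
  qed
qed

lemma SB: assumes t: "t \<ge> 1" and j: "j = b t" and IH: "\<And>k. k < j \<Longrightarrow> qq k = int (w k)"
  shows "S j = {0..int (a j)} - {int (a t)}"
proof -
  have j1: "j \<ge> 1" using j b_eq t by simp
  note UW = UW_eq[OF j1 IH]
  have aj: "a j \<ge> j" using a_ge by simp
  have F: "a j - j = a t" by (rule UB(3)[OF t j])
  show ?thesis unfolding S_UW
  proof (rule set_eqI, rule iffI)
    fix y assume "y \<in> U j \<union> W j"
    then have "y \<in> int ` w ` {..<j} \<union> {int (a j) - int j + 1 .. int (a j)}" using UW by simp
    then consider "y \<in> int ` w ` {..<j}" | "y \<in> {int (a j) - int j + 1 .. int (a j)}" by blast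
    then show "y \<in> {0..int (a j)} - {int (a t)}"
    proof cases
      case 1 then obtain x where "x \<in> w ` {..<j}" "y = int x" by blast
      then show ?thesis using UB(1)[OF t j, of x] by simp
    next
      case 2
      have "int (a t) = int (a j) - int j" using F aj by linarith
      then show ?thesis using 2 aj by simp
    qed
  next
    fix y assume y: "y \<in> {0..int (a j)} - {int (a t)}"
    consider "y < int (a t)" | "y \<ge> int (a j) - int j + 1" using F aj y by force
    then show "y \<in> U j \<union> W j"
    proof cases
      case 1
      then have "nat y \<in> w ` {..<j}" using UB(2)[OF t j, of "nat y"] y by auto
      then have "int (nat y) \<in> int ` w ` {..<j}" by blast
      then show ?thesis using y UW by simp
    next
      case 2 then show ?thesis using y UW by auto
    qed
  qed
qed

lemma qq_w: "qq j = int (w j)"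
proof (induction j rule: less_induct)
  case (less j)
  show ?case
  proof (cases "j = 0")
    case True
    have "S j = {}" unfolding S_def True by simp
    then show ?thesis unfolding qq_S True w0 by (intro mex_eqI) auto
  next
    case False
    then have j1: "j \<ge> 1" by simp
    consider (A) t where "t \<ge> 1" "j = a t" | (B) t where "t \<ge> 1" "j = b t" using AorB[OF j1] by blast
    then show ?thesis
    proof cases
      case A
      have "j \<in> A" using A aA by simp
      then have wj: "w j = a j + 1" using j1 unfolding w_def by simp
      have "S j = {0..int (a j)}" by (rule SA[OF A less.IH])
      then show ?thesis unfolding qq_S wj by (intro mex_eqI) auto
    next
      case B
      have "j \<in> B" using B bB by simp
      then have "j \<notin> A" using AB[OF j1] by simp
      then have wj: "w j = a t" using j1 UB(3)[OF B] unfolding w_def by simp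
      have "S j = {0..int (a j)} - {int (a t)}" by (rule SB[OF B less.IH])
      moreover have "a t \<le> a j" using B b_eq a_le_iff by simp
      ultimately show ?thesis unfolding qq_S wj by (intro mex_eqI) auto
    qed
  qed
qed



lemma U_w: "U j = int ` w ` {..<j}"
proof -
  have "j \<ge> 1 \<Longrightarrow> ?thesis" using UW_eq(1)[of j] qq_w by blast
  moreover have "j = 0 \<Longrightarrow> ?thesis" unfolding U_def by simp
  ultimately show ?thesis by linarith
qed

lemma W_eq: "j \<ge> 1 \<Longrightarrow> W j = {int (a j) - int j + 1 .. int (a j)}"
  using UW_eq(2)[of j] qq_w by blast

lemma nn_eqI: assumes "0 \<le> N" "{0..N} \<subseteq> U j" "N + 1 \<notin> U j" shows "nn j = N"
proof -
  have "{k::int. 0 \<le> k \<and> {0..k} \<subseteq> U j} = {0..N}"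
  proof (rule set_eqI, rule iffI)
    fix k assume k: "k \<in> {k::int. 0 \<le> k \<and> {0..k} \<subseteq> U j}"
    have "k \<le> N"
    proof (rule ccontr)
      assume "\<not> k \<le> N" then have "N + 1 \<in> {0..k}" using assms(1) by simp
      then show False using k assms(3) by blast
    qed
    then show "k \<in> {0..N}" using k by simp
  next
    fix k assume "k \<in> {0..N}" then show "k \<in> {k::int. 0 \<le> k \<and> {0..k} \<subseteq> U j}" using assms(2) by auto
  qed
  moreover have "Max {0..N} = N" by (rule Max_eqI) (use assms(1) in auto)
  ultimately show ?thesis unfolding nn_def by simp
qed

lemma finite_U: "finite (U j)" unfolding U_w by simp

lemma nn_props: assumes j: "j \<ge> 1" shows "0 \<le> nn j" "{0..nn j} \<subseteq> U j" "nn j + 1 \<notin> U j"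
proof -
  define K where "K = {k::int. 0 \<le> k \<and> {0..k} \<subseteq> U j}"
  have "0 \<in> U j" unfolding U_w using j w0 by force
  then have K0: "0 \<in> K" unfolding K_def by simp
  have "K \<subseteq> U j" unfolding K_def by auto
  then have fK: "finite K" using finite_U finite_subset by blast
  have mem: "nn j \<in> K" unfolding nn_def K_def[symmetric] using K0 fK Max_in by blast
  then show "0 \<le> nn j" "{0..nn j} \<subseteq> U j" unfolding K_def by auto
  show "nn j + 1 \<notin> U j"
  proof
    assume h: "nn j + 1 \<in> U j"
    have "{0..nn j + 1} = insert (nn j + 1) {0..nn j}" using \<open>0 \<le> nn j\<close> by auto
    then have "nn j + 1 \<in> K" using h mem unfolding K_def by auto
    then have "nn j + 1 \<le> nn j" unfolding nn_def K_def[symmetric] using Max_ge[OF fK] by blast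
    then show False by simp
  qed
qed


lemma UT2: assumes t: "t \<ge> 1" and j: "j = b t - 1"
  shows "x < a t \<Longrightarrow> x \<in> w ` {..<j}" and "a t \<notin> w ` {..<j}" and "a j - j = a t - 1" and "j \<ge> 1"
proof -
  have at: "a t \<ge> 1" using a_pos[OF t] .
  show j1: "j \<ge> 1" using j b_eq at t by simp
  have aj: "a j = 2 * a t + t - 2" using a_b1[OF t] j by simp
  show F: "a j - j = a t - 1" using aj j b_eq at t by simp
  have G: "2 * j - a j - 1 = t - 1" using aj j t b_eq at by simp
  show "a t \<notin> w ` {..<j}"
  proof
    assume h: "a t \<in> w ` {..<j}"
    have d: "a t = 0 \<or> (\<exists>n. 1 \<le> n \<and> n \<le> a t - 1 \<and> a t = b n) \<or> (\<exists>n. 1 \<le> n \<and> n \<le> t - 1 \<and> a t = a n)"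
      using h unfolding Ua_char[OF j1] F G .
    from d show False
    proof (elim disjE exE conjE)
      assume "a t = 0" then show False using at by simp
    next
      fix n assume "1 \<le> n" "a t = b n" then show False using ab_ne[OF t, of n] by simp
    next
      fix n assume "n \<le> t - 1" "a t = a n" then show False using a_inj[of t n] t by simp
    qed
  qed
  show "x \<in> w ` {..<j}" if x: "x < a t"
  proof (cases "x = 0")
    case True then show ?thesis unfolding Ua_char[OF j1] by simp
  next
    case False
    then consider n where "1 \<le> n" "x = a n" | n where "1 \<le> n" "x = b n" using AorB[of x] by auto
    then show ?thesis
    proof cases
      case (1 n) then have "n \<le> t - 1" using x a_less_iff by simp
      then show ?thesis unfolding Ua_char[OF j1] G using 1 by blast
    next
      case (2 n) then have "n \<le> a t - 1" using x b_eq by simp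
      then show ?thesis unfolding Ua_char[OF j1] F using 2 by blast
    qed
  qed
qed


lemma UT3: assumes t: "t \<ge> 1" and j: "j = 2 * a t + t"
  shows "x \<le> a t + t \<Longrightarrow> x \<in> w ` {..<j}" and "a t + t + 1 \<notin> w ` {..<j}" and "a j - j + 1 = a t + t" and "j \<ge> 1"
proof -
  have at: "a t \<ge> 1" using a_pos[OF t] .
  show j1: "j \<ge> 1" using j t by simp
  have aj: "a j = 3 * a t + 2 * t - 1" using a_2an[OF t] j by simp
  have F: "a j - j = a t + t - 1" using aj j at by simp
  then show "a j - j + 1 = a t + t" using at by simp
  have G: "2 * j - a j - 1 = a t" using aj j t at by simp
  have e: "a (a t + 1) = a t + t + 1" by (rule a_an1[OF t])
  show "a t + t + 1 \<notin> w ` {..<j}"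
  proof
    assume h: "a t + t + 1 \<in> w ` {..<j}"
    have d: "a t + t + 1 = 0 \<or> (\<exists>n. 1 \<le> n \<and> n \<le> a t + t - 1 \<and> a t + t + 1 = b n) \<or> (\<exists>n. 1 \<le> n \<and> n \<le> a t \<and> a t + t + 1 = a n)"
      using h unfolding Ua_char[OF j1] F G .
    from d show False
    proof (elim disjE exE conjE)
      assume "a t + t + 1 = 0" then show False by simp
    next
      fix n assume "1 \<le> n" "a t + t + 1 = b n" then show False using ab_ne[of "a t + 1" n] e by simp
    next
      fix n assume "n \<le> a t" "a t + t + 1 = a n" then show False using a_inj[of "a t + 1" n] e by simp
    qed
  qed
  show "x \<in> w ` {..<j}" if x: "x \<le> a t + t"
  proof (cases "x = 0")
    case True then show ?thesis unfolding Ua_char[OF j1] by simp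
  next
    case False
    then consider n where "1 \<le> n" "x = a n" | n where "1 \<le> n" "x = b n" using AorB[of x] by auto
    then show ?thesis
    proof cases
      case (1 n) then have "a n < a (a t + 1)" using x e by simp
      then have "n \<le> a t" using a_less_iff by simp
      then show ?thesis unfolding Ua_char[OF j1] G using 1 by blast
    next
      case (2 n) then have "b n \<le> b t" using x b_eq by simp
      then have "n \<le> a t + t - 1" using b_le_iff at by simp
      then show ?thesis unfolding Ua_char[OF j1] F using 2 by blast
    qed
  qed
qed



lemma GF: assumes j: "j \<ge> 1" shows "2 * j - a j - 1 \<le> a j - j"
proof -
  have "real j * phi > real j * 1.6" using phi_bounds j by simp
  then have "real (a j) + 1 > 1.6 * real j" using a_lt[of j] by linarith
  then have "3 * j \<le> 2 * a j + 1" by linarith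
  then show ?thesis by linarith
qed

lemma map_b_sorted: "sorted_wrt (<) (map (\<lambda>n. int (b n)) [K..<M])"
  unfolding sorted_wrt_map
  by (rule sorted_wrt_mono_rel[OF _ sorted_wrt_upt]) (simp add: b_less_iff)

lemma part_ii: assumes j: "j \<ge> 1"
  shows "int (length (zlist j)) = int j - nn j - 1
     \<and> (\<forall>i::nat. 1 \<le> i \<and> int i \<le> int j - nn j - 1 \<longrightarrow> z j i = int (b (kk j + i - 1)))"
proof -
  define N where "N = nn j"
  define K where "K = kk j"
  define F where "F = a j - j"
  define G where "G = 2 * j - a j - 1"
  have N0: "0 \<le> N" and Nsub: "{0..N} \<subseteq> U j" and N1: "N + 1 \<notin> U j" using nn_props[OF j] unfolding N_def by auto
  have GF': "G \<le> F" using GF[OF j] unfolding F_def G_def .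
  have Uc: "\<And>x. x \<in> w ` {..<j} \<longleftrightarrow> x = 0 \<or> (\<exists>n. 1 \<le> n \<and> n \<le> F \<and> x = b n) \<or> (\<exists>n. 1 \<le> n \<and> n \<le> G \<and> x = a n)"
    unfolding F_def G_def by (rule Ua_char[OF j])
  have memA: "a n \<in> w ` {..<j}" if "1 \<le> n" "n \<le> G" for n
    unfolding Uc by (rule disjI2, rule disjI2, rule exI[of _ n]) (use that in simp)
  have memB: "b n \<in> w ` {..<j}" if "1 \<le> n" "n \<le> F" for n
    unfolding Uc by (rule disjI2, rule disjI1, rule exI[of _ n]) (use that in simp)
  have ex: "\<exists>k. k \<ge> 1 \<and> int (b k) > N"
  proof (intro exI conjI)
    show "nat N + 1 \<ge> 1" by simp
    have "b (nat N + 1) \<ge> nat N + 1" using b_eq by simp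
    then show "int (b (nat N + 1)) > N" using N0 by linarith
  qed
  have K1: "K \<ge> 1" and KN: "int (b K) > N" using LeastI_ex[OF ex] unfolding K_def kk_def N_def by auto
  have Kle: "\<And>n. n \<ge> 1 \<Longrightarrow> int (b n) > N \<Longrightarrow> K \<le> n" unfolding K_def kk_def N_def by (rule Least_le) simp
  have y_notin: "nat N + 1 \<notin> w ` {..<j}"
  proof
    assume "nat N + 1 \<in> w ` {..<j}"
    then have "int (nat N + 1) \<in> U j" unfolding U_w by blast
    then show False using N1 N0 by (simp add: add.commute)
  qed
  have D: "U j - {0..N} = int ` b ` {K..F}"
  proof (rule set_eqI, rule iffI)
    fix y assume y: "y \<in> U j - {0..N}"
    then obtain x where x: "x \<in> w ` {..<j}" "y = int x" unfolding U_w by blast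
    have xN: "int x > N" using y x N0 by auto
    have d: "x = 0 \<or> (\<exists>n. 1 \<le> n \<and> n \<le> F \<and> x = b n) \<or> (\<exists>n. 1 \<le> n \<and> n \<le> G \<and> x = a n)"
      using x(1) unfolding Uc .
    consider "x = 0" | n where "1 \<le> n" "n \<le> F" "x = b n" | n where "1 \<le> n" "n \<le> G" "x = a n"
      using d by (elim disjE exE conjE) auto
    then show "y \<in> int ` b ` {K..F}"
    proof cases
      case 1 then show ?thesis using xN N0 by simp
    next
      case (2 n) then have "K \<le> n" using Kle xN by simp
      then show ?thesis using 2 x by auto
    next
      case (3 n)
      have ge: "nat N + 1 \<le> a n" using xN 3 N0 by linarith
      consider n' where "1 \<le> n'" "nat N + 1 = a n'" | n' where "1 \<le> n'" "nat N + 1 = b n'" using AorB[of "nat N + 1"] by auto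
      then show ?thesis
      proof cases
        case (1 n')
        then have "n' \<le> n" using ge a_le_iff by simp
        then have "nat N + 1 \<in> w ` {..<j}" using memA[of n'] 1 3 by simp
        then show ?thesis using y_notin by simp
      next
        case (2 n')
        then have "b n' \<le> b n" using ge b_eq[of n] by simp
        then have "n' \<le> n" using b_le_iff by simp
        then have "nat N + 1 \<in> w ` {..<j}" using memB[of n'] 2 3 GF' by simp
        then show ?thesis using y_notin by simp
      qed
    qed
  next
    fix y assume "y \<in> int ` b ` {K..F}"
    then obtain n where n: "K \<le> n" "n \<le> F" "y = int (b n)" by auto
    have n1: "n \<ge> 1" using n K1 by simp
    have "b n \<in> w ` {..<j}" using memB[of n] n n1 by simp
    then have "y \<in> U j" unfolding U_w using n by blast
    moreover have "b K \<le> b n" using n b_le_iff by simp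
    then have "y > N" using KN n by linarith
    ultimately show "y \<in> U j - {0..N}" by auto
  qed
  define L where "L = map (\<lambda>n. int (b n)) [K..<F+1]"
  have sL: "sorted L" "distinct L" using map_b_sorted[of K "F+1"] unfolding L_def strict_sorted_iff by auto
  have setL: "set L = int ` b ` {K..F}" unfolding L_def by auto
  have zl: "zlist j = L"
  proof -
    have fin: "finite (U j - {0..N})" using finite_U by simp
    have s1: "sorted (sorted_list_of_set (U j - {0..N}))" by simp
    have s2: "distinct (sorted_list_of_set (U j - {0..N}))" by simp
    have s3: "set (sorted_list_of_set (U j - {0..N})) = set L" using fin setL D by simp
    show ?thesis unfolding zlist_def N_def[symmetric]
      by (rule sorted_distinct_set_unique[OF s1 s2 sL s3])
  qed
  have cardU: "card (U j) = j"
  proof -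
    have "inj_on (\<lambda>k. int (w k)) {..<j}"
    proof (rule inj_onI)
      fix x y assume "int (w x) = int (w y)" then have "w x = w y" by simp
      then show "x = y" using w_inj by (simp add: inj_eq)
    qed
    then have "card ((\<lambda>k. int (w k)) ` {..<j}) = j" by (simp add: card_image)
    moreover have "(\<lambda>k. int (w k)) ` {..<j} = U j" unfolding U_w by auto
    ultimately show ?thesis by simp
  qed
  have lenz: "length (zlist j) = card (U j - {0..N})" unfolding zlist_def N_def by simp
  also have "\<dots> = card (U j) - card {0..N}" using Nsub by (simp add: card_Diff_subset)
  also have "\<dots> = j - nat (N + 1)" using cardU by simp
  finally have len1: "length (zlist j) = j - nat (N + 1)" .
  have "card {0..N} \<le> card (U j)" using Nsub finite_U card_mono by blast
  then have "nat (N + 1) \<le> j" using cardU by simp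
  then have len2: "int (length (zlist j)) = int j - N - 1" using len1 N0 by linarith
  have lenL: "length L = F + 1 - K" unfolding L_def by (auto simp: Suc_diff_le)
  show ?thesis
  proof (intro conjI allI impI)
    show "int (length (zlist j)) = int j - nn j - 1" using len2 unfolding N_def .
    fix i :: nat assume i: "1 \<le> i \<and> int i \<le> int j - nn j - 1"
    then have "int i \<le> int (length L)" using len2 zl unfolding N_def by simp
    then have "i - 1 < length L" using i by linarith
    then have "i - 1 < F + 1 - K" using lenL by simp
    then have l1: "i - 1 < length [K..<F+1]" by (simp only: length_upt)
    have l2: "K + (i - 1) < F + 1" using \<open>i - 1 < F + 1 - K\<close> by linarith
    have "L ! (i - 1) = int (b ([K..<F+1] ! (i - 1)))" unfolding L_def by (rule nth_map[OF l1])
    also have "[K..<F+1] ! (i - 1) = K + (i - 1)" by (rule nth_upt[OF l2])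
    finally have "L ! (i - 1) = int (b (K + (i - 1)))" .
    moreover have "K + (i - 1) = kk j + i - 1" using i unfolding K_def by simp
    ultimately show "z j i = int (b (kk j + i - 1))" unfolding z_def zl by simp
  qed
qed



lemma floor_pm1: "\<lfloor>(phi - 1) * real j\<rfloor> = int (a j) - int j"
proof -
  have p: "0 \<le> real j * phi" using phi_bounds by simp
  have fa: "\<lfloor>real j * phi\<rfloor> = int (a j)" unfolding a_def using p by simp
  have "(phi - 1) * real j = real j * phi - of_int (int j)" by (simp add: algebra_simps)
  then have "\<lfloor>(phi - 1) * real j\<rfloor> = \<lfloor>real j * phi\<rfloor> - int j" by (simp only: floor_diff_of_int)
  then show ?thesis using fa by simp
qed

lemma U_mem: "x \<in> w ` {..<j} \<Longrightarrow> int x \<in> U j" unfolding U_w by blast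
lemma U_mem': "int x \<in> U j \<Longrightarrow> x \<in> w ` {..<j}" unfolding U_w by auto

lemma IHall: "\<And>k. k < j \<Longrightarrow> qq k = int (w k)" using qq_w by blast

theorem lemma5p5:
  fixes j :: nat
  shows
   "(j \<ge> 1 \<longrightarrow> W j = {m j .. int (a j)})
  \<and> (j \<ge> 1 \<longrightarrow>
       int (length (zlist j)) = int j - nn j - 1
     \<and> (\<forall>i::nat. 1 \<le> i \<and> int i \<le> int j - nn j - 1 \<longrightarrow> z j i = int (b (kk j + i - 1))))
  \<and> (j \<ge> 1 \<and> j \<in> T1 \<longrightarrow> nn j = m j - 2)
  \<and> (j \<ge> 1 \<and> j \<in> T2 \<longrightarrow> nn j = m j - 1)
  \<and> (j \<ge> 1 \<and> j \<in> T3 \<longrightarrow> nn j = m j)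
  \<and> (j = 0 \<longrightarrow> S j = {})
  \<and> (j \<in> A \<longrightarrow> S j = {0 .. int (a j)})
  \<and> (j \<in> B \<longrightarrow> S j = {0 .. int (a j)} - {\<lfloor>(phi - 1) * real j\<rfloor>})
  \<and> (j = 0 \<longrightarrow> qq j = 0)
  \<and> (j \<in> A \<longrightarrow> qq j = int (a j) + 1)
  \<and> (j \<in> B \<longrightarrow> qq j = \<lfloor>(phi - 1) * real j\<rfloor>)"
proof (intro conjI impI)
  have aj: "j \<le> a j" by (rule a_ge)
  have mj: "m j = int (a j) - int j + 1" unfolding m_def by simp
  show "W j = {m j .. int (a j)}" if "j \<ge> 1" using W_eq[OF that] mj by simp
  show "int (length (zlist j)) = int j - nn j - 1" if "j \<ge> 1" using part_ii[OF that] by blast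
  show "\<forall>i::nat. 1 \<le> i \<and> int i \<le> int j - nn j - 1 \<longrightarrow> z j i = int (b (kk j + i - 1))" if "j \<ge> 1"
    using part_ii[OF that] by blast
  show "nn j = m j - 2" if h: "j \<ge> 1 \<and> j \<in> T1"
  proof -
    obtain t where t: "t \<ge> 1" "j = b t" using h unfolding T1_def by auto
    have at: "a t \<ge> 1" using a_pos[OF t(1)] .
    have "nn j = int (a t) - 1"
    proof (rule nn_eqI)
      show "0 \<le> int (a t) - 1" using at by simp
      show "{0..int (a t) - 1} \<subseteq> U j"
      proof
        fix y assume "y \<in> {0..int (a t) - 1}"
        then have "nat y < a t" "y = int (nat y)" by auto
        then show "y \<in> U j" using U_mem[OF UB(2)[OF t, of "nat y"]] by simp
      qed
      show "int (a t) - 1 + 1 \<notin> U j" using UB(1)[OF t] U_mem' by force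
    qed
    then show ?thesis using mj UB(3)[OF t] aj by linarith
  qed
  show "nn j = m j - 1" if h: "j \<ge> 1 \<and> j \<in> T2"
  proof -
    obtain t where t: "t \<ge> 1" "j = b t - 1" using h unfolding T2_def by auto
    have at: "a t \<ge> 1" using a_pos[OF t(1)] .
    have "nn j = int (a t) - 1"
    proof (rule nn_eqI)
      show "0 \<le> int (a t) - 1" using at by simp
      show "{0..int (a t) - 1} \<subseteq> U j"
      proof
        fix y assume "y \<in> {0..int (a t) - 1}"
        then have "nat y < a t" "y = int (nat y)" by auto
        then show "y \<in> U j" using U_mem[OF UT2(1)[OF t, of "nat y"]] by simp
      qed
      show "int (a t) - 1 + 1 \<notin> U j" using UT2(2)[OF t] U_mem' by force
    qed
    then show ?thesis using mj UT2(3)[OF t] aj at by linarith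
  qed
  show "nn j = m j" if h: "j \<ge> 1 \<and> j \<in> T3"
  proof -
    obtain t where t: "t \<ge> 1" "j = 2 * a t + t" using h unfolding T3_def by auto
    have "nn j = int (a t + t)"
    proof (rule nn_eqI)
      show "0 \<le> int (a t + t)" by simp
      show "{0..int (a t + t)} \<subseteq> U j"
      proof
        fix y assume "y \<in> {0..int (a t + t)}"
        then have "nat y \<le> a t + t" "y = int (nat y)" by auto
        then show "y \<in> U j" using U_mem[OF UT3(1)[OF t, of "nat y"]] by simp
      qed
      have "int (a t + t + 1) \<notin> U j" using UT3(2)[OF t] U_mem' by blast
      then show "int (a t + t) + 1 \<notin> U j" by (simp add: add.commute add.left_commute)
    qed
    then show ?thesis using mj UT3(3)[OF t] aj by linarith
  qed
  show "S j = {}" if "j = 0" unfolding S_def that by simp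
  show "qq j = 0" if "j = 0" using qq_w w0 that by simp
  show "S j = {0 .. int (a j)}" if hA: "j \<in> A"
  proof -
    obtain t where t: "t \<ge> 1" "j = a t" using hA unfolding A_def by auto
    show ?thesis by (rule SA[OF t IHall])
  qed
  show "qq j = int (a j) + 1" if "j \<in> A"
  proof -
    have "j \<ge> 1" using that notA0 by (cases j) auto
    then show ?thesis using qq_w[of j] that unfolding w_def by simp
  qed
  show "S j = {0 .. int (a j)} - {\<lfloor>(phi - 1) * real j\<rfloor>}" if hB: "j \<in> B"
  proof -
    obtain t where t: "t \<ge> 1" "j = b t" using hB unfolding B_def by auto
    have "int (a t) = \<lfloor>(phi - 1) * real j\<rfloor>" using floor_pm1[of j] UB(3)[OF t] aj by linarith
    then show ?thesis using SB[OF t IHall] by simp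
  qed
  show "qq j = \<lfloor>(phi - 1) * real j\<rfloor>" if "j \<in> B"
  proof -
    have j1: "j \<ge> 1" using that notB0 by (cases j) auto
    then have "j \<notin> A" using AB[OF j1] that by simp
    then have "w j = a j - j" using j1 unfolding w_def by simp
    then show ?thesis using qq_w[of j] floor_pm1[of j] aj by simp
  qed
qed

end
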